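(* Let $(X,d)$ be a metric space, $q_1,q_2>0$, $D>0$, and suppose that for each pair $x,y\in X$ there is a path $\eta_{xy}=\eta(x,y):[0,1]\to X$ from $x$ to $y$ satisfying (G1) $\mathrm{diam}(\eta_{xy})\le \frac{D\,d(x,y)}{2}$, (G2) $d_{\mathrm{Haus}}(\eta_{xy}([s,t]),\eta(\eta_{xy}(s),\eta_{xy}(t)))\le D$ for all $0\le s\le t\le1$, and (G3) $\eta_{xy}\subset\mathcal{N}_D(\eta_{xz}\cup\eta_{zy})$ for all $x,y,z\in X$. Let $n\in\mathbb{N}$ and let $\lambda:[0,2^n]\to X$ be a $(q_1,q_2)$-coarsely Lipschitz path. Then $$\eta(\lambda(0),\lambda(2^n))\subset \mathcal{N}_{\,nD+\frac12(q_1+q_2)D}\big(\lambda([0,2^n])\big),$$ i.e. $\eta(\lambda(0),\lambda(2^n))$ lies in the $\big(D\log_2\ell(\lambda)+\tfrac12(q_1+q_2)D\big)$-neighbourhood of $\lambda$, where $\ell(\lambda)=2^n$.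
   Context: A map $\lambda:[a,b]\to X$ is $(q_1,q_2)$-coarsely Lipschitz if $d(\lambda(s),\lambda(t))\le q_1|s-t|+q_2$ for all $s,t$. For $A\subset X$ and $r\ge0$, $\mathcal{N}_r(A)=\{p\in X: d(p,A)\le r\}$; $d_{\mathrm{Haus}}$ is Hausdorff distance; paths are identified with their images. For a path $\lambda:[0,m]\to X$, $\ell(\lambda)=m$ is its parametrisation length. *)

theory Defs
  imports "HOL-Analysis.Analysis"
begin

definition nbhd :: "real \<Rightarrow> 'a::metric_space set \<Rightarrow> 'a set" where
  "nbhd r A = {p. infdist p A \<le> r}"

definition coarsely_lipschitz_on :: "real \<Rightarrow> real \<Rightarrow> real set \<Rightarrow> (real \<Rightarrow> 'a::metric_space) \<Rightarrow> bool" where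
  "coarsely_lipschitz_on q1 q2 I lam \<longleftrightarrow>
     (\<forall>s\<in>I. \<forall>t\<in>I. dist (lam s) (lam t) \<le> q1 * \<bar>s - t\<bar> + q2)"

text \<open>diam(S) \<le> c, written out (avoids the library convention diameter = 0 for unbounded sets).\<close>
definition diam_le :: "'a::metric_space set \<Rightarrow> real \<Rightarrow> bool" where
  "diam_le S c \<longleftrightarrow> (\<forall>x\<in>S. \<forall>y\<in>S. dist x y \<le> c)"

text \<open>Hausdorff distance d_Haus(A,B) \<le> c, written out (for nonempty A, B).\<close>
definition haus_le :: "'a::metric_space set \<Rightarrow> 'a set \<Rightarrow> real \<Rightarrow> bool" where
  "haus_le A B c \<longleftrightarrow> (\<forall>a\<in>A. infdist a B \<le> c) \<and> (\<forall>b\<in>B. infdist b A \<le> c)"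

end

theory Submission
  imports Defs
begin

lemma nbhd_trans:
  fixes p :: "'a::metric_space"
  assumes "S \<noteq> {}" "p \<in> nbhd D S" "S \<subseteq> nbhd r L"
  shows "p \<in> nbhd (D + r) L"
proof -
  have "\<forall>a\<in>S. infdist p L - r \<le> dist p a"
  proof
    fix a assume a: "a \<in> S"
    have "infdist p L \<le> infdist a L + dist p a" by (rule infdist_triangle)
    moreover have "infdist a L \<le> r" using a assms(3) by (auto simp: nbhd_def)
    ultimately show "infdist p L - r \<le> dist p a" by linarith
  qed
  hence "infdist p L - r \<le> (INF a\<in>S. dist p a)"
    using assms(1) by (intro cINF_greatest) auto
  hence "infdist p L - r \<le> infdist p S"
    using assms(1) by (simp add: infdist_def)
  thus ?thesis using assms(2) by (auto simp: nbhd_def)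
qed

lemma nbhd_mono:
  fixes A :: "'a::metric_space set"
  shows "A \<subseteq> B \<Longrightarrow> A \<noteq> {} \<Longrightarrow> nbhd r A \<subseteq> nbhd r B"
proof
  fix p assume "A \<subseteq> B" "A \<noteq> {}" "p \<in> nbhd r A"
  hence "infdist p B \<le> infdist p A" "infdist p A \<le> r" by (auto intro: infdist_mono simp: nbhd_def)
  thus "p \<in> nbhd r B" unfolding nbhd_def by simp
qed

lemma main_gen:
  fixes \<eta> :: "'a::metric_space \<Rightarrow> 'a \<Rightarrow> real \<Rightarrow> 'a"
    and q1 q2 D :: real and n :: nat
  assumes D: "D > 0"
    and start: "\<And>x y. \<eta> x y 0 = x"
    and G1: "\<And>x y. diam_le (\<eta> x y ` {0..1}) (D * dist x y / 2)"
    and G3: "\<And>x y z. \<eta> x y ` {0..1} \<subseteq> nbhd D (\<eta> x z ` {0..1} \<union> \<eta> z y ` {0..1})"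
  shows "coarsely_lipschitz_on q1 q2 {0..2 ^ n} lam \<Longrightarrow> \<eta> (lam 0) (lam (2 ^ n)) ` {0..1}
           \<subseteq> nbhd (real n * D + (q1 + q2) * D / 2) (lam ` {0..2 ^ n})"
proof (induction n arbitrary: lam)
  case 0
  have d: "dist (lam 0) (lam 1) \<le> q1 + q2"
    using 0 unfolding coarsely_lipschitz_on_def
    by (drule_tac x=0 in bspec, simp, drule_tac x=1 in bspec, simp_all)
  show ?case
  proof
    fix p assume p: "p \<in> \<eta> (lam 0) (lam (2 ^ 0)) ` {0..1}"
    have l0: "lam 0 \<in> \<eta> (lam 0) (lam (2 ^ 0)) ` {0..1}" by (rule image_eqI[of _ _ 0]) (simp_all add: start)
    have "dist p (lam 0) \<le> D * dist (lam 0) (lam 1) / 2" using p l0 G1[of "lam 0" "lam 1"] unfolding diam_le_def power_0 by (meson ball_imageD)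
    also have "\<dots> \<le> D * (q1 + q2) / 2" using d D by (simp add: divide_right_mono)
    finally have "infdist p (lam ` {0..2^0}) \<le> (q1 + q2) * D / 2"
      by (intro infdist_le2[of "lam 0"]) (auto simp: algebra_simps)
    thus "p \<in> nbhd (real 0 * D + (q1 + q2) * D / 2) (lam ` {0..2 ^ 0})" by (simp add: nbhd_def)
  qed
next
  case (Suc n)
  define m :: real where "m = 2 ^ n"
  have mpos: "m > 0" unfolding m_def by simp
  have mm: "(2::real) ^ Suc n = m + m" unfolding m_def by simp
  have I1: "{0..2 ^ n} \<subseteq> {0..(2::real) ^ Suc n}" unfolding mm m_def[symmetric] using mpos by auto
  define lam' where "lam' t = lam (t + m)" for t
  have c1: "coarsely_lipschitz_on q1 q2 {0..2 ^ n} lam"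
    using Suc.prems I1 unfolding coarsely_lipschitz_on_def by blast
  have sh: "t + m \<in> {0..2 ^ Suc n}" if "t \<in> {0..2^n}" for t
    using that mpos unfolding mm m_def[symmetric] by auto
  have c2: "coarsely_lipschitz_on q1 q2 {0..2 ^ n} lam'"
    unfolding coarsely_lipschitz_on_def
  proof (intro ballI)
    fix s t :: real assume st: "s \<in> {0..2^n}" "t \<in> {0..2^n}"
    have "dist (lam (s+m)) (lam (t+m)) \<le> q1 * \<bar>(s+m) - (t+m)\<bar> + q2"
      using Suc.prems sh[OF st(1)] sh[OF st(2)] unfolding coarsely_lipschitz_on_def by blast
    thus "dist (lam' s) (lam' t) \<le> q1 * \<bar>s - t\<bar> + q2" by (simp add: lam'_def)
  qed
  let ?L = "lam ` {0..2 ^ Suc n}"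
  let ?c = "real n * D + (q1 + q2) * D / 2"
  have s1: "lam ` {0..2 ^ n} \<subseteq> ?L" using I1 by (rule image_mono)
  have s2: "lam' ` {0..2 ^ n} \<subseteq> ?L"
  proof
    fix y assume "y \<in> lam' ` {0..2 ^ n}"
    then obtain t where t: "t \<in> {0..2^n}" "y = lam (t + m)" unfolding lam'_def by blast
    thus "y \<in> ?L" using sh[OF t(1)] by blast
  qed
  have ne1: "lam ` {0..2 ^ n} \<noteq> {}" and ne2: "lam' ` {0..2 ^ n} \<noteq> {}" by auto
  have A: "\<eta> (lam 0) (lam m) ` {0..1} \<subseteq> nbhd ?c ?L"
    using Suc.IH[OF c1] nbhd_mono[OF s1 ne1] unfolding m_def by (rule order_trans)
  have e1: "lam' 0 = lam m" by (simp add: lam'_def)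
  have e2: "lam' (2 ^ n) = lam (2 ^ Suc n)" unfolding lam'_def mm m_def ..
  note e = e1 e2
  have B: "\<eta> (lam m) (lam (2 ^ Suc n)) ` {0..1} \<subseteq> nbhd ?c ?L"
    using Suc.IH[OF c2] nbhd_mono[OF s2 ne2] unfolding e by (rule order_trans)
  show ?case
  proof
    fix p assume p: "p \<in> \<eta> (lam 0) (lam (2 ^ Suc n)) ` {0..1}"
    let ?S = "\<eta> (lam 0) (lam m) ` {0..1} \<union> \<eta> (lam m) (lam (2 ^ Suc n)) ` {0..1}"
    have h1: "p \<in> nbhd D ?S" using p G3[of "lam 0" "lam (2 ^ Suc n)" "lam m"] by (rule subsetD[rotated])
    have h2: "?S \<noteq> {}" by simp
    have h3: "?S \<subseteq> nbhd ?c ?L" using A B by (rule Un_least)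
    have "p \<in> nbhd (D + ?c) ?L" by (rule nbhd_trans[OF h2 h1 h3])
    moreover have "D + ?c = real (Suc n) * D + (q1 + q2) * D / 2"
      unfolding of_nat_Suc distrib_right mult_1 by linarith
    ultimately show "p \<in> nbhd (real (Suc n) * D + (q1 + q2) * D / 2) ?L" by (simp only:)
  qed
qed

theorem mainTheorem4:
  fixes \<eta> :: "'a::metric_space \<Rightarrow> 'a \<Rightarrow> real \<Rightarrow> 'a"
    and lam :: "real \<Rightarrow> 'a"
    and q1 q2 D :: real and n :: nat
  assumes q1: "q1 > 0" and q2: "q2 > 0" and D: "D > 0"
    and start: "\<And>x y. \<eta> x y 0 = x"
    and finish: "\<And>x y. \<eta> x y 1 = y"
    and G1: "\<And>x y. diam_le (\<eta> x y ` {0..1}) (D * dist x y / 2)"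
    and G2: "\<And>x y s t. 0 \<le> s \<Longrightarrow> s \<le> t \<Longrightarrow> t \<le> 1 \<Longrightarrow>
               haus_le (\<eta> x y ` {s..t}) (\<eta> (\<eta> x y s) (\<eta> x y t) ` {0..1}) D"
    and G3: "\<And>x y z. \<eta> x y ` {0..1} \<subseteq> nbhd D (\<eta> x z ` {0..1} \<union> \<eta> z y ` {0..1})"
    and lip: "coarsely_lipschitz_on q1 q2 {0..2 ^ n} lam"
  shows "\<eta> (lam 0) (lam (2 ^ n)) ` {0..1}
           \<subseteq> nbhd (real n * D + (q1 + q2) * D / 2) (lam ` {0..2 ^ n})"
  using main_gen[OF D start G1 G3 lip] .

end
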